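(* Let $K$, $A$, $B$ be real $m\times m$ matrices with $K$ and $B$ anti-symmetric and $A$ symmetric. At a fixed interface point, let $\mathbf z^{+}(t),\mathbf z^{-}(t),\breve{\mathbf z}^{+}(t),\breve{\mathbf z}^{-}(t)\in\mathbb R^m$ be continuously differentiable functions of $t$ (the right and left traces at that interface of two time-dependent piecewise polynomial vector functions $\mathbf z_h,\breve{\mathbf z}_h$). Set $\{\mathbf z\}=\tfrac12(\mathbf z^++\mathbf z^-)$, $[\mathbf z]=\mathbf z^+-\mathbf z^-$ (similarly for $\breve{\mathbf z}$), $\{K\mathbf z\cdot\breve{\mathbf z}\}=\tfrac12(K\mathbf z^+\cdot\breve{\mathbf z}^++K\mathbf z^-\cdot\breve{\mathbf z}^-)$, and define the numerical fluxes $$\widehat{K\mathbf z}=K\{\mathbf z\}+A[\mathbf z]+B\,\tfrac{d}{dt}[\mathbf z],\qquad \widehat{K\breve{\mathbf z}}=K\{\breve{\mathbf z}\}+A[\breve{\mathbf z}]+B\,\tfrac{d}{dt}[\breve{\mathbf z}],$$ and $$\mathcal F(\mathbf z,\breve{\mathbf z})=\{K\mathbf z\cdot\breve{\mathbf z}\}-\widehat{K\mathbf z}\cdot\{\breve{\mathbf z}\}+\widehat{K\breve{\mathbf z}}\cdot\{\mathbf z\}.$$ Then $$K\mathbf z^-\cdot\breve{\mathbf z}^--\widehat{K\mathbf z}\cdot\breve{\mathbf z}^-+\widehat{K\breve{\mathbf z}}\cdot\mathbf z^-=\mathcal F(\mathbf z,\breve{\mathbf z})-\tfrac12\tfrac{d}{dt}\big(B[\breve{\mathbf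 z}]\cdot[\mathbf z]\big),$$ $$K\mathbf z^+\cdot\breve{\mathbf z}^+-\widehat{K\mathbf z}\cdot\breve{\mathbf z}^++\widehat{K\breve{\mathbf z}}\cdot\mathbf z^+=\mathcal F(\mathbf z,\breve{\mathbf z})+\tfrac12\tfrac{d}{dt}\big(B[\breve{\mathbf z}]\cdot[\mathbf z]\big).$$
   Context: $\cdot$ denotes the Euclidean inner product on $\mathbb R^m$. In the paper these identities are applied at each cell interface $x_{j+1/2}$ of a one-dimensional mesh, with $\mathbf z^\pm$ the right/left limits of discontinuous piecewise polynomial functions. *)

theory Defs
  imports "HOL-Analysis.Analysis"
begin

definition avg :: "real^'m \<Rightarrow> real^'m \<Rightarrow> real^'m" where
  "avg zp zm = (1/2) *\<^sub>R (zp + zm)"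

definition jump :: "real^'m \<Rightarrow> real^'m \<Rightarrow> real^'m" where
  "jump zp zm = zp - zm"

definition numflux :: "real^'m^'m \<Rightarrow> real^'m^'m \<Rightarrow> real^'m^'m \<Rightarrow>
    (real \<Rightarrow> real^'m) \<Rightarrow> (real \<Rightarrow> real^'m) \<Rightarrow> real \<Rightarrow> real^'m" where
  "numflux K A B zp zm t =
     K *v avg (zp t) (zm t) + A *v jump (zp t) (zm t)
     + B *v vector_derivative (\<lambda>s. jump (zp s) (zm s)) (at t)"

definition avg_prod :: "real^'m^'m \<Rightarrow> real^'m \<Rightarrow> real^'m \<Rightarrow> real^'m \<Rightarrow> real^'m \<Rightarrow> real" where
  "avg_prod K zp zm bp bm = (1/2) * ((K *v zp) \<bullet> bp + (K *v zm) \<bullet> bm)"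

definition Fcal :: "real^'m^'m \<Rightarrow> real^'m^'m \<Rightarrow> real^'m^'m \<Rightarrow>
    (real \<Rightarrow> real^'m) \<Rightarrow> (real \<Rightarrow> real^'m) \<Rightarrow> (real \<Rightarrow> real^'m) \<Rightarrow> (real \<Rightarrow> real^'m) \<Rightarrow> real \<Rightarrow> real" where
  "Fcal K A B zp zm bp bm t =
     avg_prod K (zp t) (zm t) (bp t) (bm t)
     - numflux K A B zp zm t \<bullet> avg (bp t) (bm t)
     + numflux K A B bp bm t \<bullet> avg (zp t) (zm t)"

end

theory Submission
  imports Defs
begin

lemma mv_inner_swap: "((M::real^'m^'m) *v x) \<bullet> y = x \<bullet> (transpose M *v y)"
  by (metis dot_lmul_matrix vector_transpose_matrix)

lemma neg_mv: "(- (M::real^'m^'m)) *v y = - (M *v y)"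
  by (simp add: matrix_vector_mult_def vec_eq_iff sum_negf)

theorem lemma3p1:
  fixes K A B :: "real^'m^'m"
    and zp zm bp bm :: "real \<Rightarrow> real^'m"
    and t :: real
  assumes "transpose K = - K" and "transpose B = - B" and "transpose A = A"
    and "zp C1_differentiable_on UNIV" and "zm C1_differentiable_on UNIV"
    and "bp C1_differentiable_on UNIV" and "bm C1_differentiable_on UNIV"
  shows "((K *v zm t) \<bullet> bm t - numflux K A B zp zm t \<bullet> bm t + numflux K A B bp bm t \<bullet> zm t
           = Fcal K A B zp zm bp bm t
             - (1/2) * vector_derivative (\<lambda>s. (B *v jump (bp s) (bm s)) \<bullet> jump (zp s) (zm s)) (at t))
       \<and> ((K *v zp t) \<bullet> bp t - numflux K A B zp zm t \<bullet> bp t + numflux K A B bp bm t \<bullet> zp t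
           = Fcal K A B zp zm bp bm t
             + (1/2) * vector_derivative (\<lambda>s. (B *v jump (bp s) (bm s)) \<bullet> jump (zp s) (zm s)) (at t))"
proof -
  have dzp: "(zp has_vector_derivative vector_derivative zp (at t)) (at t)"
    using assms(4) by (simp add: C1_differentiable_on_eq vector_derivative_works[symmetric])
  have dzm: "(zm has_vector_derivative vector_derivative zm (at t)) (at t)"
    using assms(5) by (simp add: C1_differentiable_on_eq vector_derivative_works[symmetric])
  have dbp: "(bp has_vector_derivative vector_derivative bp (at t)) (at t)"
    using assms(6) by (simp add: C1_differentiable_on_eq vector_derivative_works[symmetric])
  have dbm: "(bm has_vector_derivative vector_derivative bm (at t)) (at t)"
    using assms(7) by (simp add: C1_differentiable_on_eq vector_derivative_works[symmetric])
  define J where "J = jump (zp t) (zm t)"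
  define Jb where "Jb = jump (bp t) (bm t)"
  define J' where "J' = vector_derivative zp (at t) - vector_derivative zm (at t)"
  define Jb' where "Jb' = vector_derivative bp (at t) - vector_derivative bm (at t)"
  have dJ: "((\<lambda>s. jump (zp s) (zm s)) has_vector_derivative J') (at t)"
    unfolding jump_def J'_def by (intro derivative_intros dzp dzm)
  have dJb: "((\<lambda>s. jump (bp s) (bm s)) has_vector_derivative Jb') (at t)"
    unfolding jump_def Jb'_def by (intro derivative_intros dbp dbm)
  have vJ: "vector_derivative (\<lambda>s. jump (zp s) (zm s)) (at t) = J'"
    using dJ vector_derivative_at by blast
  have vJb: "vector_derivative (\<lambda>s. jump (bp s) (bm s)) (at t) = Jb'"
    using dJb vector_derivative_at by blast
  have dBJb: "((\<lambda>s. B *v jump (bp s) (bm s)) has_vector_derivative B *v Jb') (at t)"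
    using bounded_linear.has_vector_derivative[OF matrix_vector_mul_bounded_linear dJb] .
  have dP: "((\<lambda>s. (B *v jump (bp s) (bm s)) \<bullet> jump (zp s) (zm s)) has_vector_derivative
      ((B *v Jb) \<bullet> J' + (B *v Jb') \<bullet> J)) (at t)"
    using bounded_bilinear.has_vector_derivative[OF bounded_bilinear_inner dBJb dJ] unfolding J_def Jb_def
    by (simp add: inner_commute neg_mv)
  have vP: "vector_derivative (\<lambda>s. (B *v jump (bp s) (bm s)) \<bullet> jump (zp s) (zm s)) (at t)
      = (B *v Jb) \<bullet> J' + (B *v Jb') \<bullet> J"
    using dP vector_derivative_at by blast
  define Z where "Z = avg (zp t) (zm t)"
  define Bb where "Bb = avg (bp t) (bm t)"
  have zp: "zp t = Z + (1/2) *\<^sub>R J" and zm: "zm t = Z - (1/2) *\<^sub>R J"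
    unfolding Z_def J_def avg_def jump_def by (simp_all add: scaleR_add_right scaleR_diff_right scaleR_add_left[symmetric] scaleR_diff_left[symmetric])
  have bp: "bp t = Bb + (1/2) *\<^sub>R Jb" and bm: "bm t = Bb - (1/2) *\<^sub>R Jb"
    unfolding Bb_def Jb_def avg_def jump_def by (simp_all add: scaleR_add_right scaleR_diff_right scaleR_add_left[symmetric] scaleR_diff_left[symmetric])
  have nz: "numflux K A B zp zm t = K *v Z + A *v J + B *v J'"
    unfolding numflux_def Z_def J_def vJ ..
  have nb: "numflux K A B bp bm t = K *v Bb + A *v Jb + B *v Jb'"
    unfolding numflux_def Bb_def Jb_def vJb ..
  have F: "Fcal K A B zp zm bp bm t = avg_prod K (zp t) (zm t) (bp t) (bm t)
     - numflux K A B zp zm t \<bullet> Bb + numflux K A B bp bm t \<bullet> Z"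
    unfolding Fcal_def Z_def Bb_def ..
  have s1: "(K *v x) \<bullet> y = - ((K *v y) \<bullet> x)" for x y
    using mv_inner_swap[of K x y] assms(1) by (simp add: inner_commute neg_mv)
  have s2: "(B *v x) \<bullet> y = - ((B *v y) \<bullet> x)" for x y
    using mv_inner_swap[of B x y] assms(2) by (simp add: inner_commute neg_mv)
  have s3: "(A *v x) \<bullet> y = (A *v y) \<bullet> x" for x y
    using mv_inner_swap[of A x y] assms(3) by (simp add: inner_commute neg_mv)
  have e1: "(K *v J) \<bullet> Bb = - ((K *v Bb) \<bullet> J)" by (rule s1)
  have e2: "(A *v J) \<bullet> Jb = (A *v Jb) \<bullet> J" by (rule s3)
  have e3: "(B *v Jb) \<bullet> J' = - ((B *v J') \<bullet> Jb)" by (rule s2)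
  show ?thesis
    unfolding vP F nz nb avg_prod_def zp zm bp bm
    by (simp add: matrix_vector_right_distrib matrix_vector_mult_diff_distrib
        matrix_vector_mult_scaleR inner_add_left inner_add_right inner_diff_left inner_diff_right
        e1 e2 e3 algebra_simps)
qed

end
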